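(* Suppose $(\varepsilon,\beta,\gamma;(12))\in\mathrm{Par}(n)$. If $\beta$ has a cycle of odd length $d$, then $\gamma$ has at least one cycle whose length divides $d$. Here fixed points are regarded as cycles of length $1$.
   Context: A Latin square of order $n$ is an $n\times n$ array with rows, columns and symbols indexed by $[n]$, each symbol occurring once in each row and each column, with triple set $O(L)$. Permutations act on the right; $\varepsilon$ is the identity. A paratopism $(\alpha,\beta,\gamma;(12))$ maps $L$ to $L^\sigma$ with triple set $\{(y\beta,x\alpha,z\gamma):(x,y,z)\in O(L)\}$; it is an autoparatopism of $L$ if $L^\sigma=L$. $\mathrm{Par}(n)$ is the set of paratopisms that are autoparatopisms of at least one Latin square of order $n$. *)

theory Defs
  imports "HOL-Combinatorics.Permutations"
begin

text \<open>Indices, rows, columns and symbols range over [n], rendered as {0..<n}.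
A Latin square is given by its triple set O(L).\<close>

definition latin_square :: "nat \<Rightarrow> (nat \<times> nat \<times> nat) set \<Rightarrow> bool" where
  "latin_square n T \<longleftrightarrow>
     T \<subseteq> {0..<n} \<times> {0..<n} \<times> {0..<n} \<and>
     (\<forall>x\<in>{0..<n}. \<forall>y\<in>{0..<n}. \<exists>!z. (x, y, z) \<in> T) \<and>
     (\<forall>x\<in>{0..<n}. \<forall>z\<in>{0..<n}. \<exists>!y. (x, y, z) \<in> T) \<and>
     (\<forall>y\<in>{0..<n}. \<forall>z\<in>{0..<n}. \<exists>!x. (x, y, z) \<in> T)"

text \<open>Image of a triple set under the paratopism (alpha,beta,gamma;(12)):
  (x,y,z) maps to (y beta, x alpha, z gamma); permutations act on the right, so y beta = beta y.\<close>

definition paratopism12_image ::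
  "(nat \<Rightarrow> nat) \<Rightarrow> (nat \<Rightarrow> nat) \<Rightarrow> (nat \<Rightarrow> nat) \<Rightarrow> (nat \<times> nat \<times> nat) set \<Rightarrow> (nat \<times> nat \<times> nat) set" where
  "paratopism12_image \<alpha> \<beta> \<gamma> T = (\<lambda>(x, y, z). (\<beta> y, \<alpha> x, \<gamma> z)) ` T"

definition Par12 :: "nat \<Rightarrow> ((nat \<Rightarrow> nat) \<times> (nat \<Rightarrow> nat) \<times> (nat \<Rightarrow> nat)) set" where
  "Par12 n = {(\<alpha>, \<beta>, \<gamma>). \<alpha> permutes {0..<n} \<and> \<beta> permutes {0..<n} \<and> \<gamma> permutes {0..<n} \<and>
      (\<exists>T. latin_square n T \<and> paratopism12_image \<alpha> \<beta> \<gamma> T = T)}"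

definition cycle_length :: "(nat \<Rightarrow> nat) \<Rightarrow> nat \<Rightarrow> nat" where
  "cycle_length p x = (LEAST k. 0 < k \<and> (p ^^ k) x = x)"

end

theory Submission
  imports Defs
begin

lemma least_dvd:
  fixes p :: "nat \<Rightarrow> nat"
  assumes "0 < d" "(p ^^ d) c = c"
  shows "(LEAST k. 0 < k \<and> (p ^^ k) c = c) dvd d"
proof -
  define l where "l = (LEAST k. 0 < k \<and> (p ^^ k) c = c)"
  have l: "0 < l \<and> (p ^^ l) c = c" unfolding l_def by (rule LeastI[of _ d]) (use assms in auto)
  have pw: "(p ^^ (l * q)) c = c" for q
  proof (induction q)
    case (Suc q)
    have "(p ^^ (l * Suc q)) c = (p ^^ (l * q)) ((p ^^ l) c)"
      by (simp only: mult_Suc_right add.commute[of l] funpow_add comp_apply)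
    then show ?case using l Suc by simp
  qed simp
  have "d = d mod l + l * (d div l)" by simp
  then have "(p ^^ d) c = (p ^^ (d mod l)) ((p ^^ (l * (d div l))) c)"
    by (metis comp_apply funpow_add)
  then have m: "(p ^^ (d mod l)) c = c" using pw assms by simp
  have "d mod l = 0"
  proof (rule ccontr)
    assume "d mod l \<noteq> 0"
    then have "0 < d mod l \<and> (p ^^ (d mod l)) c = c" using m by simp
    then have "l \<le> d mod l" unfolding l_def by (rule Least_le)
    moreover have "d mod l < l" using l by simp
    ultimately show False by simp
  qed
  then show ?thesis unfolding l_def[symmetric] by auto
qed

theorem theorem4p3:
  fixes n d :: nat and \<beta> \<gamma> :: "nat \<Rightarrow> nat"
  assumes "(id, \<beta>, \<gamma>) \<in> Par12 n"
    and "x \<in> {0..<n}" and "cycle_length \<beta> x = d" and "odd d"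
  shows "\<exists>y\<in>{0..<n}. cycle_length \<gamma> y dvd d"
proof -
  from assms(1) obtain T where pb: "\<beta> permutes {0..<n}" and pg: "\<gamma> permutes {0..<n}"
    and L: "latin_square n T" and inv: "paratopism12_image id \<beta> \<gamma> T = T"
    unfolding Par12_def by auto
  have step: "(\<beta> b, a, \<gamma> c) \<in> T" if "(a, b, c) \<in> T" for a b c
  proof -
    have "(\<beta> b, id a, \<gamma> c) \<in> paratopism12_image id \<beta> \<gamma> T"
      unfolding paratopism12_image_def using that by force
    then show ?thesis using inv by simp
  qed
  have step2: "((\<beta> ^^ k) a, (\<beta> ^^ k) b, (\<gamma> ^^ (2*k)) c) \<in> T" if "(a, b, c) \<in> T" for a b c k
  proof (induction k)
    case 0 then show ?case using that by simp
  next
    case (Suc k)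
    from step[OF step[OF Suc]] show ?case
      by simp
  qed
  have "permutation \<beta>" using pb by (metis finite_atLeastLessThan permutation_permutes)
  then obtain k where k: "0 < k" "(\<beta> ^^ k) x = x" by (rule permutation_self)
  have d0: "0 < d \<and> (\<beta> ^^ d) x = x"
    using assms(3) unfolding cycle_length_def using LeastI[of "\<lambda>k. 0 < k \<and> (\<beta> ^^ k) x = x" k, OF conjI[OF k]] by simp
  obtain m where dm: "d = 2*m+1" using assms(4) oddE by blast
  define b where "b = (\<beta> ^^ m) x"
  have bin: "b \<in> {0..<n}" unfolding b_def using pb assms(2) by (rule permutes_in_funpow_image)
  have LL: "\<forall>x\<in>{0..<n}. \<forall>y\<in>{0..<n}. \<exists>!z. (x, y, z) \<in> T" using L unfolding latin_square_def by (elim conjE)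
  then have ex1: "\<exists>!z. (x, b, z) \<in> T" using bin assms(2) by blast
  then obtain c where c: "(x, b, c) \<in> T" by blast
  have Tsub: "T \<subseteq> {0..<n} \<times> {0..<n} \<times> {0..<n}" using L unfolding latin_square_def by (elim conjE)
  have cin: "c \<in> {0..<n}" using Tsub c by auto
  have "((\<beta> ^^ m) x, (\<beta> ^^ m) b, (\<gamma> ^^ (2*m)) c) \<in> T" by (rule step2[OF c])
  from step[OF this] have "(\<beta> ((\<beta> ^^ m) ((\<beta> ^^ m) x)), b, \<gamma> ((\<gamma> ^^ (2*m)) c)) \<in> T"
    unfolding b_def by simp
  moreover have "\<beta> ((\<beta> ^^ m) ((\<beta> ^^ m) x)) = (\<beta> ^^ d) x"
    unfolding dm by (simp add: funpow_add mult_2)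
  moreover have "\<gamma> ((\<gamma> ^^ (2*m)) c) = (\<gamma> ^^ d) c" unfolding dm by simp
  ultimately have "(x, b, (\<gamma> ^^ d) c) \<in> T" using d0 by simp
  then have "(\<gamma> ^^ d) c = c" using c ex1 by blast
  then have "cycle_length \<gamma> c dvd d" unfolding cycle_length_def using d0 by (intro least_dvd) auto
  then show ?thesis using cin by blast
qed

end
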